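(* Let $\{(\mathcal{X}_l,\mathring{\mathcal{X}}_l,p_l)\}_{l\in\mathcal{I}}$ be $B$-$B$-bimodules with specified projections with reduced free product $(\mathcal{X},\mathring{\mathcal{X}},p)$. For $1\le i\le m$ let $A_i\in\mathcal{A}_{k(i)}$ be a Boolean product of elements from $\mathcal{A}_{k(i),\mathcal{F}}\cup\mathcal{A}_{k(i),\mathcal{B}}$, where $k(1)\ne k(2)\ne\cdots\ne k(m)$ (consecutive indices distinct). Then $\mathbb{E}_{\mathcal{L}(\mathcal{X})}(A_1\cdots A_m)=\mathbb{E}_{\mathcal{L}(\mathcal{X})}(A_1)\cdots\mathbb{E}_{\mathcal{L}(\mathcal{X})}(A_m)$.
   Context: $B$ is a unital complex algebra. A $B$-$B$-bimodule with specified projection is a triple $(\mathcal{X},\mathring{\mathcal{X}},p)$ with $\mathcal{X}=B\oplus\mathring{\mathcal{X}}$ a direct sum of $B$-$B$-bimodules and $p(b\oplus\eta)=b$; $\mathcal{L}(\mathcal{X})$ is the algebra of linear operators on $\mathcal{X}$ respecting the bimodule structure and $\mathbb{E}_{\mathcal{L}(\mathcal{X})}(T)=p(T(1_B\oplus0))$. The reduced free product is $\mathcal{X}=B\oplus\mathring{\mathcal{X}}$ with $\mathring{\mathcal{X}}=\bigoplus_{n\ge1}\bigoplus_{i_1\ne\cdots\ne i_n}\mathring{\mathcal{X}}_{i_1}\otimes_B\cdots\otimes_B\mathring{\mathcal{X}}_{i_n}$ (consecutive indices distinct), $p$ the projection onto $B$. For $l\in\mathcal{I}$, $\mathcal{X}(l)=B\oplus\bigoplus_{n\ge1}\bigoplus_{i_1\ne\cdots\ne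 i_n,\ i_1\ne l}\mathring{\mathcal{X}}_{i_1}\otimes_B\cdots\otimes_B\mathring{\mathcal{X}}_{i_n}$, $V_l:\mathcal{X}\to\mathcal{X}_l\otimes_B\mathcal{X}(l)$ the natural isomorphism, $\lambda_l(a)=V_l^{-1}(a\otimes I)V_l$, $P_l$ the projection onto the summand $B\oplus\mathring{\mathcal{X}}_l$, $\mathcal{A}_{l,\mathcal{F}}=\lambda_l(\mathcal{L}(\mathcal{X}_l))$, $\mathcal{A}_{l,\mathcal{B}}=P_l\lambda_l(\mathcal{L}(\mathcal{X}_l))P_l$, $\mathcal{A}_l$ the algebra generated by both. A product $a_1\cdots a_r$ with all $a_t\in\mathcal{A}_{l,\mathcal{F}}\cup\mathcal{A}_{l,\mathcal{B}}$ is a Boolean product if some factor $a_t$ lies in $\mathcal{A}_{l,\mathcal{B}}$. *)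

theory Defs
  imports Complex_Main "HOL-Library.Poly_Mapping" "HOL-Library.Product_Plus"
begin

definition complex_algebra :: "(complex \<Rightarrow> 'b::ring_1) \<Rightarrow> bool" where
  "complex_algebra \<iota> \<longleftrightarrow>
     \<iota> 1 = 1 \<and> (\<forall>c d. \<iota> (c + d) = \<iota> c + \<iota> d) \<and> (\<forall>c d. \<iota> (c * d) = \<iota> c * \<iota> d)
     \<and> (\<forall>c b. \<iota> c * b = b * \<iota> c)"

record ('b, 'v) bimod =
  bm_carrier :: "'v set"
  bm_zero :: 'v
  bm_add :: "'v \<Rightarrow> 'v \<Rightarrow> 'v"
  bm_lmul :: "'b \<Rightarrow> 'v \<Rightarrow> 'v"
  bm_rmul :: "'v \<Rightarrow> 'b \<Rightarrow> 'v"

text \<open>A B-B-bimodule (over the complex algebra B; complex scalars act through \<iota>,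
  and the left and right complex actions agree).\<close>

definition bimodule :: "(complex \<Rightarrow> 'b::ring_1) \<Rightarrow> ('b, 'v, 'z) bimod_scheme \<Rightarrow> bool" where
  "bimodule \<iota> M \<longleftrightarrow>
    (let C = bm_carrier M; z = bm_zero M; ad = bm_add M; lm = bm_lmul M; rm = bm_rmul M in
     z \<in> C \<and> (\<forall>x\<in>C. \<forall>y\<in>C. ad x y \<in> C)
     \<and> (\<forall>x\<in>C. \<forall>y\<in>C. \<forall>w\<in>C. ad (ad x y) w = ad x (ad y w))
     \<and> (\<forall>x\<in>C. \<forall>y\<in>C. ad x y = ad y x)
     \<and> (\<forall>x\<in>C. ad z x = x)
     \<and> (\<forall>x\<in>C. \<exists>y\<in>C. ad x y = z)
     \<and> (\<forall>b. \<forall>x\<in>C. lm b x \<in> C \<and> rm x b \<in> C)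
     \<and> (\<forall>x\<in>C. lm 1 x = x \<and> rm x 1 = x)
     \<and> (\<forall>b b'. \<forall>x\<in>C. lm (b * b') x = lm b (lm b' x))
     \<and> (\<forall>b b'. \<forall>x\<in>C. rm x (b * b') = rm (rm x b) b')
     \<and> (\<forall>b b'. \<forall>x\<in>C. lm b (rm x b') = rm (lm b x) b')
     \<and> (\<forall>b. \<forall>x\<in>C. \<forall>y\<in>C. lm b (ad x y) = ad (lm b x) (lm b y))
     \<and> (\<forall>b. \<forall>x\<in>C. \<forall>y\<in>C. rm (ad x y) b = ad (rm x b) (rm y b))
     \<and> (\<forall>b b'. \<forall>x\<in>C. lm (b + b') x = ad (lm b x) (lm b' x))
     \<and> (\<forall>b b'. \<forall>x\<in>C. rm x (b + b') = ad (rm x b) (rm x b'))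
     \<and> (\<forall>c. \<forall>x\<in>C. lm (\<iota> c) x = rm x (\<iota> c)))"

text \<open>Linear operators respecting the bimodule structure (complex linearity follows
  from additivity and B-linearity, since complex scalars act through B).\<close>

definition bimod_map :: "('b::ring_1, 'v, 'z) bimod_scheme \<Rightarrow> ('b, 'w, 'y) bimod_scheme \<Rightarrow> ('v \<Rightarrow> 'w) \<Rightarrow> bool" where
  "bimod_map M N T \<longleftrightarrow>
     (\<forall>x\<in>bm_carrier M. T x \<in> bm_carrier N)
     \<and> (\<forall>x\<in>bm_carrier M. \<forall>y\<in>bm_carrier M. T (bm_add M x y) = bm_add N (T x) (T y))
     \<and> (\<forall>b. \<forall>x\<in>bm_carrier M. T (bm_lmul M b x) = bm_lmul N b (T x))
     \<and> (\<forall>b. \<forall>x\<in>bm_carrier M. T (bm_rmul M x b) = bm_rmul N (T x) b)"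

text \<open>The bimodule with specified projection X = B \<oplus> Xo, elements being pairs (b, \<eta>).\<close>

definition plusB :: "('b::ring_1, 'v, 'z) bimod_scheme \<Rightarrow> ('b, 'b \<times> 'v) bimod" where
  "plusB M = \<lparr> bm_carrier = UNIV \<times> bm_carrier M,
               bm_zero = (0, bm_zero M),
               bm_add = (\<lambda>(b, x) (b', x'). (b + b', bm_add M x x')),
               bm_lmul = (\<lambda>c (b, x). (c * b, bm_lmul M c x)),
               bm_rmul = (\<lambda>(b, x) c. (b * c, bm_rmul M x c)) \<rparr>"

definition Lops :: "('b::ring_1, 'v, 'z) bimod_scheme \<Rightarrow> ('b \<times> 'v \<Rightarrow> 'b \<times> 'v) set" where
  "Lops M = {a. bimod_map (plusB M) (plusB M) a}"

text \<open>Words (i_1,\<xi>_1)\<dots>(i_n,\<xi>_n), n \<ge> 1, consecutive indices distinct, \<xi>_j \<in> Xo_{i_j};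
  the word stands for the elementary tensor \<xi>_1 \<otimes>_B \<dots> \<otimes>_B \<xi>_n.\<close>

definition fp_words :: "('i \<Rightarrow> ('b, 'v, 'z) bimod_scheme) \<Rightarrow> 'i set \<Rightarrow> ('i \<times> 'v) list set" where
  "fp_words Xo I = {w. w \<noteq> [] \<and> (\<forall>(i, x)\<in>set w. i \<in> I \<and> x \<in> bm_carrier (Xo i))
                       \<and> (\<forall>j. Suc j < length w \<longrightarrow> fst (w ! j) \<noteq> fst (w ! Suc j))}"

text \<open>Generators of the relations defining the algebraic tensor products over B
  (additivity in each slot and B-balancedness between adjacent slots).\<close>

definition fp_gens :: "('i \<Rightarrow> ('b::ring_1, 'v, 'z) bimod_scheme) \<Rightarrow> 'i set \<Rightarrow> (('i \<times> 'v) list \<Rightarrow>\<^sub>0 int) set" where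
  "fp_gens Xo I =
     {frag_of (u @ [(i, bm_add (Xo i) x y)] @ v) - frag_of (u @ [(i, x)] @ v) - frag_of (u @ [(i, y)] @ v)
        | u v i x y. u @ [(i, x)] @ v \<in> fp_words Xo I \<and> y \<in> bm_carrier (Xo i)}
   \<union> {frag_of (u @ [(i, bm_rmul (Xo i) x b), (j, y)] @ v) - frag_of (u @ [(i, x), (j, bm_lmul (Xo j) b y)] @ v)
        | u v i x j y b. u @ [(i, x), (j, y)] @ v \<in> fp_words Xo I}"

inductive_set fp_rel :: "('i \<Rightarrow> ('b::ring_1, 'v, 'z) bimod_scheme) \<Rightarrow> 'i set \<Rightarrow> (('i \<times> 'v) list \<Rightarrow>\<^sub>0 int) set"
  for Xo I where
  zero: "0 \<in> fp_rel Xo I"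
| gen: "g \<in> fp_gens Xo I \<Longrightarrow> g \<in> fp_rel Xo I"
| add: "g \<in> fp_rel Xo I \<Longrightarrow> h \<in> fp_rel Xo I \<Longrightarrow> g + h \<in> fp_rel Xo I"
| neg: "g \<in> fp_rel Xo I \<Longrightarrow> - g \<in> fp_rel Xo I"

text \<open>Representatives of elements of X = B \<oplus> Xo: a B-component and an integer
  combination of words; an element of X is the class of a representative modulo
  {0} \<times> fp_rel.\<close>

type_synonym ('b, 'i, 'v) fp_rep = "'b \<times> (('i \<times> 'v) list \<Rightarrow>\<^sub>0 int)"
type_synonym ('b, 'i, 'v) fp_elem = "('b, 'i, 'v) fp_rep set"

definition fp_cls :: "('i \<Rightarrow> ('b::ring_1, 'v, 'z) bimod_scheme) \<Rightarrow> 'i set \<Rightarrow> ('b, 'i, 'v) fp_rep \<Rightarrow> ('b, 'i, 'v) fp_elem" where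
  "fp_cls Xo I r = {r + (0, n) | n. n \<in> fp_rel Xo I}"

definition fp_lift :: "('i \<Rightarrow> ('b::ring_1, 'v, 'z) bimod_scheme) \<Rightarrow> 'i set \<Rightarrow> (('b, 'i, 'v) fp_rep \<Rightarrow> ('b, 'i, 'v) fp_rep) \<Rightarrow> ('b, 'i, 'v) fp_elem \<Rightarrow> ('b, 'i, 'v) fp_elem" where
  "fp_lift Xo I F x = {F r + (0, n) | r n. r \<in> x \<and> n \<in> fp_rel Xo I}"

definition rep_extend :: "('b::ring_1 \<Rightarrow> ('b, 'i, 'v) fp_rep) \<Rightarrow> (('i \<times> 'v) list \<Rightarrow> ('b, 'i, 'v) fp_rep) \<Rightarrow> ('b, 'i, 'v) fp_rep \<Rightarrow> ('b, 'i, 'v) fp_rep" where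
  "rep_extend fB fW r =
     fB (fst r) + ((\<Sum>w\<in>Poly_Mapping.keys (snd r). of_int (Poly_Mapping.lookup (snd r) w) * fst (fW w)),
                   frag_extend (\<lambda>w. snd (fW w)) (snd r))"

definition word_lmul :: "('i \<Rightarrow> ('b::ring_1, 'v, 'z) bimod_scheme) \<Rightarrow> 'b \<Rightarrow> ('i \<times> 'v) list \<Rightarrow> ('i \<times> 'v) list" where
  "word_lmul Xo b w = (case w of [] \<Rightarrow> [] | (i, x) # u \<Rightarrow> (i, bm_lmul (Xo i) b x) # u)"

definition word_rmul :: "('i \<Rightarrow> ('b::ring_1, 'v, 'z) bimod_scheme) \<Rightarrow> ('i \<times> 'v) list \<Rightarrow> 'b \<Rightarrow> ('i \<times> 'v) list" where
  "word_rmul Xo w b = (if w = [] then [] else butlast w @ [(fst (last w), bm_rmul (Xo (fst (last w))) (snd (last w)) b)])"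

definition free_product :: "('i \<Rightarrow> ('b::ring_1, 'v, 'z) bimod_scheme) \<Rightarrow> 'i set \<Rightarrow> ('b, ('b, 'i, 'v) fp_elem) bimod" where
  "free_product Xo I =
     \<lparr> bm_carrier = {fp_cls Xo I (b, g) | b g. Poly_Mapping.keys g \<subseteq> fp_words Xo I},
       bm_zero = fp_cls Xo I 0,
       bm_add = (\<lambda>x y. {r + s | r s. r \<in> x \<and> s \<in> y}),
       bm_lmul = (\<lambda>c. fp_lift Xo I (rep_extend (\<lambda>b. (c * b, 0)) (\<lambda>w. (0, frag_of (word_lmul Xo c w))))),
       bm_rmul = (\<lambda>x c. fp_lift Xo I (rep_extend (\<lambda>b. (b * c, 0)) (\<lambda>w. (0, frag_of (word_rmul Xo w c)))) x) \<rparr>"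

definition fp_p :: "('b, 'i, 'v) fp_elem \<Rightarrow> 'b" where
  "fp_p x = fst (SOME r. r \<in> x)"

definition fp_E :: "('i \<Rightarrow> ('b::ring_1, 'v, 'z) bimod_scheme) \<Rightarrow> 'i set \<Rightarrow> (('b, 'i, 'v) fp_elem \<Rightarrow> ('b, 'i, 'v) fp_elem) \<Rightarrow> 'b" where
  "fp_E Xo I T = fp_p (T (fp_cls Xo I (1, 0)))"

text \<open>\<lambda>_l(a) = V_l^(-1) (a \<otimes> I) V_l, computed on representatives:
  a word (l,\<xi>)w' (w' \<in> X(l)) corresponds to \<xi> \<otimes> w', and a word w (or b \<in> B) in X(l)
  corresponds to (1_B \<oplus> 0) \<otimes> w. Writing a(\<zeta>) = b' \<oplus> \<eta>, the image of \<zeta> \<otimes> w' is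
  b'w' + (l,\<eta>)w'.\<close>

definition lam_word :: "('i \<Rightarrow> ('b::ring_1, 'v, 'z) bimod_scheme) \<Rightarrow> 'i \<Rightarrow> ('b \<times> 'v \<Rightarrow> 'b \<times> 'v)
     \<Rightarrow> ('i \<times> 'v) list \<Rightarrow> ('b, 'i, 'v) fp_rep" where
  "lam_word Xo l a w =
     (case w of
        [] \<Rightarrow> 0
      | (i, x) # u \<Rightarrow>
          (if i = l then
             (let (b', \<eta>) = a (0, x) in
                if u = [] then (b', frag_of [(l, \<eta>)])
                else (0, frag_of (word_lmul Xo b' u) + frag_of ((l, \<eta>) # u)))
           else
             (let (b', \<eta>) = a (1, bm_zero (Xo l)) in
                (0, frag_of (word_lmul Xo b' w) + frag_of ((l, \<eta>) # w)))))"

definition lam_B :: "'i \<Rightarrow> ('b::ring_1 \<times> 'v \<Rightarrow> 'b \<times> 'v) \<Rightarrow> ('i \<Rightarrow> ('b, 'v, 'z) bimod_scheme) \<Rightarrow> 'b \<Rightarrow> ('b, 'i, 'v) fp_rep" where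
  "lam_B l a Xo b = (let (b', \<eta>) = a (b, bm_zero (Xo l)) in (b', frag_of [(l, \<eta>)]))"

definition fp_lambda :: "('i \<Rightarrow> ('b::ring_1, 'v, 'z) bimod_scheme) \<Rightarrow> 'i set \<Rightarrow> 'i \<Rightarrow> ('b \<times> 'v \<Rightarrow> 'b \<times> 'v)
     \<Rightarrow> ('b, 'i, 'v) fp_elem \<Rightarrow> ('b, 'i, 'v) fp_elem" where
  "fp_lambda Xo I l a = fp_lift Xo I (rep_extend (lam_B l a Xo) (lam_word Xo l a))"

definition fp_P :: "('i \<Rightarrow> ('b::ring_1, 'v, 'z) bimod_scheme) \<Rightarrow> 'i set \<Rightarrow> 'i
     \<Rightarrow> ('b, 'i, 'v) fp_elem \<Rightarrow> ('b, 'i, 'v) fp_elem" where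
  "fp_P Xo I l = fp_lift Xo I (rep_extend (\<lambda>b. (b, 0))
      (\<lambda>w. if length w = 1 \<and> fst (hd w) = l then (0, frag_of w) else 0))"

definition A_free :: "('i \<Rightarrow> ('b::ring_1, 'v, 'z) bimod_scheme) \<Rightarrow> 'i set \<Rightarrow> 'i
     \<Rightarrow> (('b, 'i, 'v) fp_elem \<Rightarrow> ('b, 'i, 'v) fp_elem) set" where
  "A_free Xo I l = fp_lambda Xo I l ` Lops (Xo l)"

definition A_bool :: "('i \<Rightarrow> ('b::ring_1, 'v, 'z) bimod_scheme) \<Rightarrow> 'i set \<Rightarrow> 'i
     \<Rightarrow> (('b, 'i, 'v) fp_elem \<Rightarrow> ('b, 'i, 'v) fp_elem) set" where
  "A_bool Xo I l = (\<lambda>a. fp_P Xo I l \<circ> fp_lambda Xo I l a \<circ> fp_P Xo I l) ` Lops (Xo l)"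

definition boolean_product :: "('i \<Rightarrow> ('b::ring_1, 'v, 'z) bimod_scheme) \<Rightarrow> 'i set \<Rightarrow> 'i
     \<Rightarrow> (('b, 'i, 'v) fp_elem \<Rightarrow> ('b, 'i, 'v) fp_elem) \<Rightarrow> bool" where
  "boolean_product Xo I l A \<longleftrightarrow>
     (\<exists>as. as \<noteq> [] \<and> set as \<subseteq> A_free Xo I l \<union> A_bool Xo I l
           \<and> (\<exists>a\<in>set as. a \<in> A_bool Xo I l) \<and> A = foldr (\<circ>) as id)"

end

theory Submission
  imports Defs
begin


definition lin :: "(('i \<times> 'v) list \<Rightarrow> ('b::ring_1, 'i, 'v) fp_rep) \<Rightarrow> (('i \<times> 'v) list \<Rightarrow>\<^sub>0 int) \<Rightarrow> ('b, 'i, 'v) fp_rep" where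
  "lin fW g = ((\<Sum>w\<in>Poly_Mapping.keys g. of_int (Poly_Mapping.lookup g w) * fst (fW w)),
               frag_extend (\<lambda>w. snd (fW w)) g)"

lemma rep_extend_split: "rep_extend fB fW r = fB (fst r) + lin fW (snd r)"
  by (simp add: rep_extend_def lin_def)

lemma fstsum_superset:
  fixes f :: "'a \<Rightarrow> 'b::ring_1"
  assumes "finite T" "Poly_Mapping.keys g \<subseteq> T"
  shows "(\<Sum>w\<in>Poly_Mapping.keys g. of_int (Poly_Mapping.lookup g w) * f w)
       = (\<Sum>w\<in>T. of_int (Poly_Mapping.lookup g w) * f w)"
  by (rule sum.mono_neutral_left) (use assms in \<open>auto simp: in_keys_iff\<close>)

lemma fstsum_add:
  fixes f :: "'a \<Rightarrow> 'b::ring_1"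
  shows "(\<Sum>w\<in>Poly_Mapping.keys (g + h). of_int (Poly_Mapping.lookup (g + h) w) * f w)
       = (\<Sum>w\<in>Poly_Mapping.keys g. of_int (Poly_Mapping.lookup g w) * f w)
       + (\<Sum>w\<in>Poly_Mapping.keys h. of_int (Poly_Mapping.lookup h w) * f w)"
proof -
  let ?T = "Poly_Mapping.keys g \<union> Poly_Mapping.keys h"
  have fin: "finite ?T" by simp
  have k: "Poly_Mapping.keys (g + h) \<subseteq> ?T" by (rule keys_add)
  show ?thesis
    apply (subst fstsum_superset[OF fin k])
    apply (subst fstsum_superset[OF fin, of g]) apply blast
    apply (subst fstsum_superset[OF fin, of h]) apply blast
    by (simp add: lookup_add distrib_right sum.distrib)
qed

lemma lin_add: "lin fW (g + h) = lin fW g + lin fW h"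
  by (simp add: lin_def fstsum_add frag_extend_add)

lemma lin_0: "lin fW 0 = 0"
  by (simp add: lin_def zero_prod_def)

lemma lin_neg: "lin fW (- g) = - lin fW g"
  by (metis add.inverse_unique add.right_inverse lin_0 lin_add)

lemma lin_diff: "lin fW (g - h) = lin fW g - lin fW h"
  by (metis diff_conv_add_uminus lin_add lin_neg)

lemma lin_of: "lin fW (frag_of w) = fW w"
  by (simp add: lin_def)

lemma rel_diff: "g \<in> fp_rel Xo I \<Longrightarrow> h \<in> fp_rel Xo I \<Longrightarrow> g - h \<in> fp_rel Xo I"
  by (metis diff_conv_add_uminus fp_rel.add fp_rel.neg)

lemma gen_rel: "g \<in> fp_gens Xo I \<Longrightarrow> g \<in> fp_rel Xo I" by (rule fp_rel.gen)

lemma cls_eq: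
  assumes "fst r = fst s" "snd r - snd s \<in> fp_rel Xo I"
  shows "fp_cls Xo I r = fp_cls Xo I s"
proof -
  have "\<And>n. n \<in> fp_rel Xo I \<Longrightarrow> r + (0, n) = s + (0, n + (snd r - snd s))"
    using assms by (cases r, cases s) auto
  moreover have "\<And>n. n \<in> fp_rel Xo I \<Longrightarrow> s + (0, n) = r + (0, n - (snd r - snd s))"
    using assms by (cases r, cases s) auto
  ultimately show ?thesis unfolding fp_cls_def
    using assms(2) by (auto intro!: fp_rel.add rel_diff)
qed

definition good :: "('i \<Rightarrow> ('b::ring_1, 'v, 'z) bimod_scheme) \<Rightarrow> 'i set \<Rightarrow> (('i \<times> 'v) list \<Rightarrow> ('b, 'i, 'v) fp_rep) \<Rightarrow> bool" where
  "good Xo I fW \<longleftrightarrow> (\<forall>g\<in>fp_gens Xo I. fst (lin fW g) = 0 \<and> snd (lin fW g) \<in> fp_rel Xo I)"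

lemma good_rel:
  assumes "good Xo I fW" "n \<in> fp_rel Xo I"
  shows "fst (lin fW n) = 0 \<and> snd (lin fW n) \<in> fp_rel Xo I"
  using assms(2)
proof induction
  case zero then show ?case by (simp add: lin_0 fp_rel.zero)
next
  case (gen g) then show ?case using assms(1) good_def by blast
next
  case (add g h) then show ?case by (simp add: lin_add fp_rel.add)
next
  case (neg g) then show ?case by (simp add: lin_neg fp_rel.neg)
qed

lemma lift_cls:
  assumes "good Xo I fW"
  shows "fp_lift Xo I (rep_extend fB fW) (fp_cls Xo I r) = fp_cls Xo I (rep_extend fB fW r)"
proof -
  have F: "rep_extend fB fW (r + (0, n)) = rep_extend fB fW r + lin fW n" for n
    by (simp add: rep_extend_split lin_add)
  show ?thesis
  proof (rule set_eqI, rule iffI)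
    fix z assume "z \<in> fp_lift Xo I (rep_extend fB fW) (fp_cls Xo I r)"
    then obtain n1 n where n1: "n1 \<in> fp_rel Xo I" and n: "n \<in> fp_rel Xo I"
      and z: "z = rep_extend fB fW (r + (0, n1)) + (0, n)"
      unfolding fp_lift_def fp_cls_def by blast
    have g: "fst (lin fW n1) = 0" "snd (lin fW n1) \<in> fp_rel Xo I" using good_rel[OF assms n1] by auto
    have "z = rep_extend fB fW r + (0, snd (lin fW n1) + n)"
      using z g unfolding F by (cases "lin fW n1") auto
    then show "z \<in> fp_cls Xo I (rep_extend fB fW r)"
      unfolding fp_cls_def using g n fp_rel.add by blast
  next
    fix z assume "z \<in> fp_cls Xo I (rep_extend fB fW r)"
    then obtain n where n: "n \<in> fp_rel Xo I" and z: "z = rep_extend fB fW r + (0, n)"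
      unfolding fp_cls_def by blast
    have "r \<in> fp_cls Xo I r" unfolding fp_cls_def using fp_rel.zero
      by (metis (mono_tags, lifting) add.right_neutral mem_Collect_eq zero_prod_def)
    then show "z \<in> fp_lift Xo I (rep_extend fB fW) (fp_cls Xo I r)"
      unfolding fp_lift_def using z n by blast
  qed
qed

lemma p_cls: "fp_p (fp_cls Xo I r) = fst r"
proof -
  have "r \<in> fp_cls Xo I r" unfolding fp_cls_def using fp_rel.zero
    by (metis (mono_tags, lifting) add.right_neutral mem_Collect_eq zero_prod_def)
  then have "(SOME s. s \<in> fp_cls Xo I r) \<in> fp_cls Xo I r" by (rule someI)
  then show ?thesis unfolding fp_p_def fp_cls_def by auto
qed



lemma bm_facts:
  assumes "bimodule \<iota> M"
  shows "bm_zero M \<in> bm_carrier M"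
    "\<And>x y. x \<in> bm_carrier M \<Longrightarrow> y \<in> bm_carrier M \<Longrightarrow> bm_add M x y \<in> bm_carrier M"
    "\<And>b x. x \<in> bm_carrier M \<Longrightarrow> bm_lmul M b x \<in> bm_carrier M"
    "\<And>b x. x \<in> bm_carrier M \<Longrightarrow> bm_rmul M x b \<in> bm_carrier M"
    "\<And>b x y. x \<in> bm_carrier M \<Longrightarrow> y \<in> bm_carrier M \<Longrightarrow> bm_lmul M b (bm_add M x y) = bm_add M (bm_lmul M b x) (bm_lmul M b y)"
    "\<And>b b' x. x \<in> bm_carrier M \<Longrightarrow> bm_lmul M (b * b') x = bm_lmul M b (bm_lmul M b' x)"
    "\<And>b b' x. x \<in> bm_carrier M \<Longrightarrow> bm_lmul M b (bm_rmul M x b') = bm_rmul M (bm_lmul M b x) b'"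
    "\<And>b b' x. x \<in> bm_carrier M \<Longrightarrow> bm_lmul M (b + b') x = bm_add M (bm_lmul M b x) (bm_lmul M b' x)"
    "\<And>x. x \<in> bm_carrier M \<Longrightarrow> bm_add M (bm_zero M) x = x"
    "\<And>x y w. x \<in> bm_carrier M \<Longrightarrow> y \<in> bm_carrier M \<Longrightarrow> w \<in> bm_carrier M \<Longrightarrow> bm_add M (bm_add M x y) w = bm_add M x (bm_add M y w)"
    "\<And>x y. x \<in> bm_carrier M \<Longrightarrow> y \<in> bm_carrier M \<Longrightarrow> bm_add M x y = bm_add M y x"
    "\<And>x. x \<in> bm_carrier M \<Longrightarrow> \<exists>y\<in>bm_carrier M. bm_add M x y = bm_zero M"
    "\<And>b x y. x \<in> bm_carrier M \<Longrightarrow> y \<in> bm_carrier M \<Longrightarrow> bm_rmul M (bm_add M x y) b = bm_add M (bm_rmul M x b) (bm_rmul M y b)"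
  using assms unfolding bimodule_def Let_def by auto

lemma rm_zero:
  assumes "bimodule \<iota> M"
  shows "bm_rmul M (bm_zero M) c = bm_zero M"
proof -
  note f = bm_facts[OF assms]
  let ?z = "bm_zero M" and ?y = "bm_rmul M (bm_zero M) c"
  have yC: "?y \<in> bm_carrier M" using f(1,4) by blast
  have "bm_add M ?z ?z = ?z" using f(1,9) by blast
  then have yy: "bm_add M ?y ?y = ?y" using f(13)[of ?z ?z c] f(1) by simp
  obtain y' where y': "y' \<in> bm_carrier M" "bm_add M ?y y' = ?z" using f(12)[OF yC] by blast
  have "?z = bm_add M (bm_add M ?y ?y) y'" using yy y' by simp
  also have "\<dots> = bm_add M ?y ?z" using f(10)[OF yC yC y'(1)] y' by simp
  also have "\<dots> = ?y" using f(11)[OF yC f(1)] f(9)[OF yC] by simp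
  finally show ?thesis by simp
qed

lemma succ_idx: "(\<forall>j. Suc j < length w \<longrightarrow> fst (w ! j) \<noteq> fst (w ! Suc j)) \<longleftrightarrow> successively (\<noteq>) (map fst w)"
proof (induction w rule: induct_list012)
  case (3 x y zs)
  have "(\<forall>j. Suc j < length (x # y # zs) \<longrightarrow> fst ((x # y # zs) ! j) \<noteq> fst ((x # y # zs) ! Suc j))
      \<longleftrightarrow> fst x \<noteq> fst y \<and> (\<forall>j. Suc j < length (y # zs) \<longrightarrow> fst ((y # zs) ! j) \<noteq> fst ((y # zs) ! Suc j))"
    by (auto simp: less_Suc_eq_0_disj All_less_Suc2 nth_Cons split: nat.splits)
  then show ?case using 3 by simp
qed auto

lemma W_iff: "w \<in> fp_words Xo I \<longleftrightarrow> w \<noteq> [] \<and> (\<forall>p\<in>set w. fst p \<in> I \<and> snd p \<in> bm_carrier (Xo (fst p)))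
     \<and> successively (\<noteq>) (map fst w)"
  unfolding fp_words_def succ_idx[symmetric] by auto

lemma W_replace:
  assumes "u @ [(i, x)] @ v \<in> fp_words Xo I" "x' \<in> bm_carrier (Xo i)"
  shows "u @ [(i, x')] @ v \<in> fp_words Xo I"
  using assms unfolding W_iff by (auto simp: successively_append_iff)

lemma W_replace2:
  assumes "u @ [(i, x), (j, y)] @ v \<in> fp_words Xo I" "x' \<in> bm_carrier (Xo i)" "y' \<in> bm_carrier (Xo j)"
  shows "u @ [(i, x'), (j, y')] @ v \<in> fp_words Xo I"
  using assms unfolding W_iff by (auto simp: successively_append_iff)

lemma W_idx: "u @ [(i, x)] @ v \<in> fp_words Xo I \<Longrightarrow> i \<in> I \<and> x \<in> bm_carrier (Xo i)"
  unfolding W_iff by auto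

lemma W_idx2: "u @ [(i, x), (j, y)] @ v \<in> fp_words Xo I \<Longrightarrow> i \<in> I \<and> x \<in> bm_carrier (Xo i) \<and> j \<in> I \<and> y \<in> bm_carrier (Xo j)"
  unfolding W_iff by auto

lemma W_cons:
  assumes "w \<in> fp_words Xo I" "l \<in> I" "\<eta> \<in> bm_carrier (Xo l)" "l \<noteq> fst (hd w)"
  shows "(l, \<eta>) # w \<in> fp_words Xo I"
  using assms unfolding W_iff by (cases w) auto

lemma W_tl:
  assumes "p # w \<in> fp_words Xo I" "w \<noteq> []"
  shows "w \<in> fp_words Xo I" "fst p \<noteq> fst (hd w)"
  using assms unfolding W_iff by (cases w; auto)+

lemma gA:
  assumes "u @ [(i, x)] @ v \<in> fp_words Xo I" "y \<in> bm_carrier (Xo i)"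
  shows "frag_of (u @ [(i, bm_add (Xo i) x y)] @ v) - frag_of (u @ [(i, x)] @ v) - frag_of (u @ [(i, y)] @ v) \<in> fp_rel Xo I"
  apply (rule fp_rel.gen) unfolding fp_gens_def using assms by blast

lemma gB:
  assumes "u @ [(i, x), (j, y)] @ v \<in> fp_words Xo I"
  shows "frag_of (u @ [(i, bm_rmul (Xo i) x b), (j, y)] @ v) - frag_of (u @ [(i, x), (j, bm_lmul (Xo j) b y)] @ v) \<in> fp_rel Xo I"
  apply (rule fp_rel.gen) unfolding fp_gens_def using assms by blast

lemma LA:
  assumes W: "p @ [(i, x)] @ v \<in> fp_words Xo I" and y: "y \<in> bm_carrier (Xo i)"
    and bm: "\<forall>l\<in>I. bimodule \<iota> (Xo l)"
  shows "frag_of (word_lmul Xo b (p @ [(i, bm_add (Xo i) x y)] @ v)) - frag_of (word_lmul Xo b (p @ [(i, x)] @ v))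
        - frag_of (word_lmul Xo b (p @ [(i, y)] @ v)) \<in> fp_rel Xo I"
proof (cases p)
  case Nil
  have iI: "i \<in> I" "x \<in> bm_carrier (Xo i)" using W_idx[OF W] by auto
  note f = bm_facts[OF bm[rule_format, OF iI(1)]]
  have W': "[] @ [(i, bm_lmul (Xo i) b x)] @ v \<in> fp_words Xo I"
    using W_replace[of "[]" i x v Xo I] W Nil f(3)[OF iI(2)] by simp
  show ?thesis using gA[OF W' f(3)[OF y, of b]] Nil f(5)[OF iI(2) y]
    by (simp add: word_lmul_def)
next
  case (Cons q p')
  obtain i0 x0 where q: "q = (i0, x0)" by fastforce
  have iI: "i0 \<in> I" "x0 \<in> bm_carrier (Xo i0)" using W_idx[of "[]" i0 x0 "p' @ [(i, x)] @ v"] W Cons q by auto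
  note f = bm_facts[OF bm[rule_format, OF iI(1)]]
  have "(i0, bm_lmul (Xo i0) b x0) # p' @ [(i, x)] @ v \<in> fp_words Xo I"
    using W_replace[of "[]" i0 x0 "p' @ [(i, x)] @ v" Xo I] W Cons q f(3)[OF iI(2)] by simp
  then have W': "((i0, bm_lmul (Xo i0) b x0) # p') @ [(i, x)] @ v \<in> fp_words Xo I" by simp
  show ?thesis using gA[OF W' y] Cons q by (simp add: word_lmul_def)
qed

lemma LB:
  assumes W: "p @ [(i, x), (j, y)] @ v \<in> fp_words Xo I"
    and bm: "\<forall>l\<in>I. bimodule \<iota> (Xo l)"
  shows "frag_of (word_lmul Xo b (p @ [(i, bm_rmul (Xo i) x c), (j, y)] @ v))
       - frag_of (word_lmul Xo b (p @ [(i, x), (j, bm_lmul (Xo j) c y)] @ v)) \<in> fp_rel Xo I"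
proof (cases p)
  case Nil
  have iI: "i \<in> I" "x \<in> bm_carrier (Xo i)" "j \<in> I" "y \<in> bm_carrier (Xo j)" using W_idx2[OF W] by auto
  note f = bm_facts[OF bm[rule_format, OF iI(1)]]
  have W': "[] @ [(i, bm_lmul (Xo i) b x), (j, y)] @ v \<in> fp_words Xo I"
    using W_replace2[of "[]" i x j y v Xo I] W Nil f(3)[OF iI(2)] iI by simp
  show ?thesis using gB[OF W', of c] Nil f(7)[OF iI(2)]
    by (simp add: word_lmul_def)
next
  case (Cons q p')
  obtain i0 x0 where q: "q = (i0, x0)" by fastforce
  have iI: "i0 \<in> I" "x0 \<in> bm_carrier (Xo i0)" using W_idx[of "[]" i0 x0 "p' @ [(i, x), (j, y)] @ v"] W Cons q by auto
  note f = bm_facts[OF bm[rule_format, OF iI(1)]]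
  have "(i0, bm_lmul (Xo i0) b x0) # p' @ [(i, x), (j, y)] @ v \<in> fp_words Xo I"
    using W_replace[of "[]" i0 x0 "p' @ [(i, x), (j, y)] @ v" Xo I] W Cons q f(3)[OF iI(2)] by simp
  then have W': "((i0, bm_lmul (Xo i0) b x0) # p') @ [(i, x), (j, y)] @ v \<in> fp_words Xo I" by simp
  show ?thesis using gB[OF W', of c] Cons q by (simp add: word_lmul_def)
qed



lemma lop_map: "a \<in> Lops M \<Longrightarrow> bimod_map (plusB M) (plusB M) a"
  by (simp add: Lops_def)

lemma lop_car: "a \<in> Lops M \<Longrightarrow> x \<in> bm_carrier M \<Longrightarrow> snd (a (b, x)) \<in> bm_carrier M"
  unfolding Lops_def bimod_map_def plusB_def by (auto simp: mem_Times_iff)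

lemma lop_add:
  assumes "a \<in> Lops M" "x \<in> bm_carrier M" "x' \<in> bm_carrier M"
  shows "a (b + b', bm_add M x x') = (fst (a (b, x)) + fst (a (b', x')), bm_add M (snd (a (b, x))) (snd (a (b', x'))))"
proof -
  have "a (bm_add (plusB M) (b, x) (b', x')) = bm_add (plusB M) (a (b, x)) (a (b', x'))"
    using assms unfolding Lops_def bimod_map_def by (auto simp: plusB_def)
  then show ?thesis by (simp add: plusB_def case_prod_beta)
qed

lemma lop_rmul:
  assumes "a \<in> Lops M" "x \<in> bm_carrier M"
  shows "a (b * c, bm_rmul M x c) = (fst (a (b, x)) * c, bm_rmul M (snd (a (b, x))) c)"
proof -
  have "a (bm_rmul (plusB M) (b, x) c) = bm_rmul (plusB M) (a (b, x)) c"
    using assms unfolding Lops_def bimod_map_def by (auto simp: plusB_def)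
  then show ?thesis by (simp add: plusB_def case_prod_beta)
qed

lemma lw1: "lam_word Xo l a [(l, x)] = (fst (a (0, x)), frag_of [(l, snd (a (0, x)))])"
  by (simp add: lam_word_def case_prod_beta)

lemma lw2: "t \<noteq> [] \<Longrightarrow> lam_word Xo l a ((l, x) # t) =
   (0, frag_of (word_lmul Xo (fst (a (0, x))) t) + frag_of ((l, snd (a (0, x))) # t))"
  by (simp add: lam_word_def case_prod_beta)

lemma lw3: "i \<noteq> l \<Longrightarrow> lam_word Xo l a ((i, x) # t) =
   (0, frag_of (word_lmul Xo (fst (a (1, bm_zero (Xo l)))) ((i, x) # t))
      + frag_of ((l, snd (a (1, bm_zero (Xo l)))) # (i, x) # t))"
  by (simp add: lam_word_def case_prod_beta)

definition Phi :: "('i \<Rightarrow> ('b::ring_1, 'v, 'z) bimod_scheme) \<Rightarrow> 'i \<Rightarrow> 'b \<Rightarrow> 'v \<Rightarrow> ('i \<times> 'v) list \<Rightarrow> ('b, 'i, 'v) fp_rep" where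
  "Phi Xo l b \<eta> t = (0, frag_of (word_lmul Xo b t) + frag_of ((l, \<eta>) # t))"

lemma lw_other:
  assumes nf: "\<not> (u = [] \<and> i = l)" and W: "u @ (i, x) # v \<in> fp_words Xo I"
    and a: "a \<in> Lops (Xo l)" and bl: "bimodule \<iota> (Xo l)"
  obtains b \<eta> p where "\<eta> \<in> bm_carrier (Xo l)"
    "\<And>z t. lam_word Xo l a (u @ (i, z) # t) = Phi Xo l b \<eta> (p @ (i, z) # t)"
    "\<And>z t. u @ (i, z) # t \<in> fp_words Xo I \<Longrightarrow> p @ (i, z) # t \<in> fp_words Xo I \<and> l \<noteq> fst (hd (p @ (i, z) # t))"
proof (cases u)
  case Nil
  then have il: "i \<noteq> l" using nf by simp
  show ?thesis
    apply (rule that[of "snd (a (1, bm_zero (Xo l)))" "fst (a (1, bm_zero (Xo l)))" "[]"])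
    using lop_car[OF a bm_facts(1)[OF bl]] il Nil by (auto simp: lw3 Phi_def)
next
  case (Cons q u')
  obtain i0 x0 where q: "q = (i0, x0)" by fastforce
  have x0: "x0 \<in> bm_carrier (Xo i0)" using W Cons q unfolding W_iff by auto
  show ?thesis
  proof (cases "i0 = l")
    case True
    show ?thesis
      apply (rule that[of "snd (a (0, x0))" "fst (a (0, x0))" "u'"])
      using lop_car[OF a] x0 True Cons q apply simp
      using True Cons q apply (simp add: lw2 Phi_def)
      using True Cons q W_tl[of "(l, x0)"] by fastforce
  next
    case False
    show ?thesis
      apply (rule that[of "snd (a (1, bm_zero (Xo l)))" "fst (a (1, bm_zero (Xo l)))" "u"])
      using lop_car[OF a bm_facts(1)[OF bl]] False Cons q by (auto simp: lw3 Phi_def)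
  qed
qed

lemma phi_gA:
  assumes W: "p @ (i, x) # v \<in> fp_words Xo I" and y: "y \<in> bm_carrier (Xo i)"
    and bm: "\<forall>l\<in>I. bimodule \<iota> (Xo l)" and l: "l \<in> I" "\<eta> \<in> bm_carrier (Xo l)"
    and hd: "l \<noteq> fst (hd (p @ (i, x) # v))"
  shows "fst (Phi Xo l b \<eta> (p @ (i, bm_add (Xo i) x y) # v) - Phi Xo l b \<eta> (p @ (i, x) # v) - Phi Xo l b \<eta> (p @ (i, y) # v)) = 0
    \<and> snd (Phi Xo l b \<eta> (p @ (i, bm_add (Xo i) x y) # v) - Phi Xo l b \<eta> (p @ (i, x) # v) - Phi Xo l b \<eta> (p @ (i, y) # v)) \<in> fp_rel Xo I"
proof -
  have 1: "frag_of (word_lmul Xo b (p @ [(i, bm_add (Xo i) x y)] @ v)) - frag_of (word_lmul Xo b (p @ [(i, x)] @ v))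
        - frag_of (word_lmul Xo b (p @ [(i, y)] @ v)) \<in> fp_rel Xo I"
    using LA[of p i x v Xo I y \<iota> b] W y bm by simp
  have "(l, \<eta>) # p @ (i, x) # v \<in> fp_words Xo I" using W_cons[OF W l hd] .
  then have 2: "frag_of (((l, \<eta>) # p) @ [(i, bm_add (Xo i) x y)] @ v) - frag_of (((l, \<eta>) # p) @ [(i, x)] @ v)
        - frag_of (((l, \<eta>) # p) @ [(i, y)] @ v) \<in> fp_rel Xo I"
    using gA[of "(l, \<eta>) # p" i x v Xo I y] y by simp
  show ?thesis using fp_rel.add[OF 1 2] by (simp add: Phi_def algebra_simps)
qed

lemma phi_gB:
  assumes W: "p @ (i, x) # (j, y) # v \<in> fp_words Xo I"
    and bm: "\<forall>l\<in>I. bimodule \<iota> (Xo l)" and l: "l \<in> I" "\<eta> \<in> bm_carrier (Xo l)"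
    and hd: "l \<noteq> fst (hd (p @ (i, x) # (j, y) # v))"
  shows "fst (Phi Xo l b \<eta> (p @ (i, bm_rmul (Xo i) x c) # (j, y) # v) - Phi Xo l b \<eta> (p @ (i, x) # (j, bm_lmul (Xo j) c y) # v)) = 0
    \<and> snd (Phi Xo l b \<eta> (p @ (i, bm_rmul (Xo i) x c) # (j, y) # v) - Phi Xo l b \<eta> (p @ (i, x) # (j, bm_lmul (Xo j) c y) # v)) \<in> fp_rel Xo I"
proof -
  have 1: "frag_of (word_lmul Xo b (p @ [(i, bm_rmul (Xo i) x c), (j, y)] @ v))
       - frag_of (word_lmul Xo b (p @ [(i, x), (j, bm_lmul (Xo j) c y)] @ v)) \<in> fp_rel Xo I"
    using LB[of p i x j y v Xo I \<iota> b c] W bm by simp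
  have "(l, \<eta>) # p @ (i, x) # (j, y) # v \<in> fp_words Xo I" using W_cons[OF W l hd] .
  then have 2: "frag_of (((l, \<eta>) # p) @ [(i, bm_rmul (Xo i) x c), (j, y)] @ v)
      - frag_of (((l, \<eta>) # p) @ [(i, x), (j, bm_lmul (Xo j) c y)] @ v) \<in> fp_rel Xo I"
    using gB[of "(l, \<eta>) # p" i x j y v Xo I c] by simp
  show ?thesis using fp_rel.add[OF 1 2] by (simp add: Phi_def algebra_simps)
qed



lemma good_lam:
  assumes bm: "\<forall>l\<in>I. bimodule \<iota> (Xo l)" and lI: "l \<in> I" and a: "a \<in> Lops (Xo l)"
  shows "good Xo I (lam_word Xo l a)"
  unfolding good_def
proof
  fix g assume "g \<in> fp_gens Xo I"
  note bl = bm[rule_format, OF lI]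
  note fl = bm_facts[OF bl]
  let ?L = "lam_word Xo l a"
  show "fst (lin ?L g) = 0 \<and> snd (lin ?L g) \<in> fp_rel Xo I"
    using \<open>g \<in> fp_gens Xo I\<close> unfolding fp_gens_def
  proof (elim UnE CollectE exE conjE)
    fix u v i x y
    assume g: "g = frag_of (u @ [(i, bm_add (Xo i) x y)] @ v) - frag_of (u @ [(i, x)] @ v) - frag_of (u @ [(i, y)] @ v)"
      and W0: "u @ [(i, x)] @ v \<in> fp_words Xo I" and y: "y \<in> bm_carrier (Xo i)"
    have W: "u @ (i, x) # v \<in> fp_words Xo I" using W0 by simp
    have ix: "i \<in> I" "x \<in> bm_carrier (Xo i)" using W_idx[OF W0] by auto
    have lg: "lin ?L g = ?L (u @ (i, bm_add (Xo i) x y) # v) - ?L (u @ (i, x) # v) - ?L (u @ (i, y) # v)"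
      by (simp add: g lin_diff lin_of)
    show ?thesis
    proof (cases "u = [] \<and> i = l")
      case True
      then have u: "u = []" and il: "i = l" by auto
      have xC: "x \<in> bm_carrier (Xo l)" and yC: "y \<in> bm_carrier (Xo l)" using ix y il by auto
      have aa: "a (0, bm_add (Xo l) x y) = (fst (a (0, x)) + fst (a (0, y)), bm_add (Xo l) (snd (a (0, x))) (snd (a (0, y))))"
        using lop_add[OF a xC yC, of 0 0] by simp
      have ex: "snd (a (0, x)) \<in> bm_carrier (Xo l)" "snd (a (0, y)) \<in> bm_carrier (Xo l)"
        using lop_car[OF a] xC yC by auto
      show ?thesis
      proof (cases v)
        case Nil
        have Wl: "[] @ [(l, snd (a (0, x)))] @ [] \<in> fp_words Xo I"
          using lI ex unfolding W_iff by simp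
        show ?thesis using gA[OF Wl ex(2)] unfolding lg u il Nil
          by (simp add: lw1 aa)
      next
        case (Cons q v')
        obtain j t where q: "q = (j, t)" by fastforce
        have Wv: "(j, t) # v' \<in> fp_words Xo I" and lj: "l \<noteq> j"
          using W_tl[of "(l, x)" "(j, t) # v'"] W u il Cons q by auto
        have jt: "j \<in> I" "t \<in> bm_carrier (Xo j)" using Wv unfolding W_iff by auto
        note fj = bm_facts[OF bm[rule_format, OF jt(1)]]
        have W1: "[] @ [(j, bm_lmul (Xo j) (fst (a (0, x))) t)] @ v' \<in> fp_words Xo I"
          using W_replace[of "[]" j t v' Xo I] Wv fj(3)[OF jt(2)] by simp
        note r1 = gA[OF W1 fj(3)[OF jt(2), of "fst (a (0, y))"]]
        have W2: "[] @ [(l, snd (a (0, x)))] @ (j, t) # v' \<in> fp_words Xo I"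
          using W_cons[OF Wv lI ex(1)] lj by simp
        note r2 = gA[OF W2 ex(2)]
        have e: "bm_lmul (Xo j) (fst (a (0, x)) + fst (a (0, y))) t
            = bm_add (Xo j) (bm_lmul (Xo j) (fst (a (0, x))) t) (bm_lmul (Xo j) (fst (a (0, y))) t)"
          using fj(8)[OF jt(2)] .
        show ?thesis using fp_rel.add[OF r1 r2] unfolding lg u il Cons q
          by (simp add: lw2 aa word_lmul_def e algebra_simps)
      qed
    next
      case False
      obtain b \<eta> p where \<eta>: "\<eta> \<in> bm_carrier (Xo l)"
        and L: "\<And>z t. ?L (u @ (i, z) # t) = Phi Xo l b \<eta> (p @ (i, z) # t)"
        and V: "\<And>z t. u @ (i, z) # t \<in> fp_words Xo I \<Longrightarrow> p @ (i, z) # t \<in> fp_words Xo I \<and> l \<noteq> fst (hd (p @ (i, z) # t))"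
        using lw_other[OF False W a bl] by metis
      show ?thesis unfolding lg L using phi_gA[OF _ y bm lI \<eta>, where p=p and v=v and b=b] V[OF W] by simp
    qed
  next
    fix u v i x j y c
    assume g: "g = frag_of (u @ [(i, bm_rmul (Xo i) x c), (j, y)] @ v) - frag_of (u @ [(i, x), (j, bm_lmul (Xo j) c y)] @ v)"
      and W0: "u @ [(i, x), (j, y)] @ v \<in> fp_words Xo I"
    have W: "u @ (i, x) # (j, y) # v \<in> fp_words Xo I" using W0 by simp
    have ix: "i \<in> I" "x \<in> bm_carrier (Xo i)" "j \<in> I" "y \<in> bm_carrier (Xo j)" using W_idx2[OF W0] by auto
    have lg: "lin ?L g = ?L (u @ (i, bm_rmul (Xo i) x c) # (j, y) # v) - ?L (u @ (i, x) # (j, bm_lmul (Xo j) c y) # v)"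
      by (simp add: g lin_diff lin_of)
    show ?thesis
    proof (cases "u = [] \<and> i = l")
      case True
      then have u: "u = []" and il: "i = l" by auto
      have xC: "x \<in> bm_carrier (Xo l)" using ix il by auto
      have aa: "a (0, bm_rmul (Xo l) x c) = (fst (a (0, x)) * c, bm_rmul (Xo l) (snd (a (0, x))) c)"
        using lop_rmul[OF a xC, of 0 c] by simp
      have ex: "snd (a (0, x)) \<in> bm_carrier (Xo l)" using lop_car[OF a] xC by auto
      have Wv: "(j, y) # v \<in> fp_words Xo I" and lj: "l \<noteq> j"
        using W_tl[of "(l, x)" "(j, y) # v"] W u il by auto
      note fj = bm_facts[OF bm[rule_format, OF ix(3)]]
      have W2: "[] @ [(l, snd (a (0, x))), (j, y)] @ v \<in> fp_words Xo I"
        using W_cons[OF Wv lI ex] lj by simp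
      note r2 = gB[OF W2, of c]
      have e: "bm_lmul (Xo j) (fst (a (0, x)) * c) y = bm_lmul (Xo j) (fst (a (0, x))) (bm_lmul (Xo j) c y)"
        using fj(6)[OF ix(4)] .
      show ?thesis using r2 unfolding lg u il
        by (simp add: lw2 aa word_lmul_def e algebra_simps)
    next
      case False
      obtain b \<eta> p where \<eta>: "\<eta> \<in> bm_carrier (Xo l)"
        and L: "\<And>z t. ?L (u @ (i, z) # t) = Phi Xo l b \<eta> (p @ (i, z) # t)"
        and V: "\<And>z t. u @ (i, z) # t \<in> fp_words Xo I \<Longrightarrow> p @ (i, z) # t \<in> fp_words Xo I \<and> l \<noteq> fst (hd (p @ (i, z) # t))"
        using lw_other[OF False W a bl] by metis
      show ?thesis unfolding lg L using phi_gB[OF _ bm lI \<eta>, where p=p and i=i and x=x and j=j and y=y and v=v and b=b and c=c] V[OF W] by simp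
    qed
  qed
qed

definition Pw :: "'i \<Rightarrow> ('i \<times> 'v) list \<Rightarrow> ('b::ring_1, 'i, 'v) fp_rep" where
  "Pw l = (\<lambda>w. if length w = 1 \<and> fst (hd w) = l then (0, frag_of w) else 0)"

lemma good_P: "good Xo I (Pw l)"
  unfolding good_def
proof
  fix g assume "g \<in> fp_gens Xo I"
  then show "fst (lin (Pw l) g) = 0 \<and> snd (lin (Pw l) g) \<in> fp_rel Xo I"
    unfolding fp_gens_def
  proof (elim UnE CollectE exE conjE)
    fix u v i x y
    assume g: "g = frag_of (u @ [(i, bm_add (Xo i) x y)] @ v) - frag_of (u @ [(i, x)] @ v) - frag_of (u @ [(i, y)] @ v)"
      and W0: "u @ [(i, x)] @ v \<in> fp_words Xo I" and y: "y \<in> bm_carrier (Xo i)"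
    show ?thesis
    proof (cases "u = [] \<and> v = [] \<and> i = l")
      case True
      then show ?thesis using gA[OF W0 y] g by (simp add: lin_diff lin_of Pw_def)
    next
      case False
      then show ?thesis using g by (auto simp: lin_diff lin_of Pw_def fp_rel.zero zero_prod_def)
    qed
  next
    fix u v i x j y c
    assume g: "g = frag_of (u @ [(i, bm_rmul (Xo i) x c), (j, y)] @ v) - frag_of (u @ [(i, x), (j, bm_lmul (Xo j) c y)] @ v)"
    then show ?thesis by (auto simp: lin_diff lin_of Pw_def fp_rel.zero zero_prod_def)
  qed
qed



abbreviation "Lrep Xo l a \<equiv> rep_extend (lam_B l a Xo) (lam_word Xo l a)"
abbreviation "Prep l \<equiv> rep_extend (\<lambda>b. (b, 0)) (Pw l)"
definition phi :: "'i \<Rightarrow> 'b \<times> 'v \<Rightarrow> ('b::ring_1, 'i, 'v) fp_rep" where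
  "phi l z = (fst z, frag_of [(l, snd z)])"

lemma P_eq: "fp_P Xo I l = fp_lift Xo I (Prep l)"
  by (simp add: fp_P_def Pw_def)

lemma lam_cls:
  assumes "\<forall>l\<in>I. bimodule \<iota> (Xo l)" "l \<in> I" "a \<in> Lops (Xo l)"
  shows "fp_lambda Xo I l a (fp_cls Xo I r) = fp_cls Xo I (Lrep Xo l a r)"
  unfolding fp_lambda_def by (rule lift_cls[OF good_lam[OF assms]])

lemma P_cls: "fp_P Xo I l (fp_cls Xo I r) = fp_cls Xo I (Prep l r)"
  unfolding P_eq by (rule lift_cls[OF good_P])

lemma neg_zero_rel:
  assumes "bimodule \<iota> (Xo l)" "l \<in> I"
  shows "- frag_of [(l, bm_zero (Xo l))] \<in> fp_rel Xo I"
proof -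
  note f = bm_facts[OF assms(1)]
  have W: "[] @ [(l, bm_zero (Xo l))] @ [] \<in> fp_words Xo I" using assms f(1) unfolding W_iff by simp
  have "bm_add (Xo l) (bm_zero (Xo l)) (bm_zero (Xo l)) = bm_zero (Xo l)" using f(1,9) by blast
  then show ?thesis using gA[OF W f(1)] by simp
qed

lemma cls_c0:
  assumes "bimodule \<iota> (Xo l)" "l \<in> I"
  shows "fp_cls Xo I (c, 0) = fp_cls Xo I (phi l (c, bm_zero (Xo l)))"
  by (rule cls_eq) (use neg_zero_rel[where Xo=Xo and l=l, OF assms] in \<open>simp_all add: phi_def\<close>)

lemma lamB_eq: "lam_B l a Xo b = (fst (a (b, bm_zero (Xo l))), frag_of [(l, snd (a (b, bm_zero (Xo l))))])"
  unfolding lam_B_def by (simp add: Let_def split_def)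

lemma phi_lam:
  assumes bm: "\<forall>l\<in>I. bimodule \<iota> (Xo l)" and lI: "l \<in> I" and a: "a \<in> Lops (Xo l)"
    and x: "x \<in> bm_carrier (Xo l)"
  shows "fp_cls Xo I (Lrep Xo l a (phi l (b, x))) = fp_cls Xo I (phi l (a (b, x)))"
proof -
  note f = bm_facts[OF bm[rule_format, OF lI]]
  let ?z = "bm_zero (Xo l)"
  have aa: "a (b, x) = (fst (a (b, ?z)) + fst (a (0, x)), bm_add (Xo l) (snd (a (b, ?z))) (snd (a (0, x))))"
    using lop_add[OF a f(1) x, of b 0] f(9)[OF x] by simp
  have ex: "snd (a (b, ?z)) \<in> bm_carrier (Xo l)" "snd (a (0, x)) \<in> bm_carrier (Xo l)"
    using lop_car[OF a] f(1) x by auto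
  have W: "[] @ [(l, snd (a (b, ?z)))] @ [] \<in> fp_words Xo I" using lI ex unfolding W_iff by simp
  have L: "Lrep Xo l a (b, frag_of [(l, x)]) = (fst (a (b, ?z)) + fst (a (0, x)), frag_of [(l, snd (a (b, ?z)))] + frag_of [(l, snd (a (0, x)))])"
    by (simp only: rep_extend_split lin_of lw1 lamB_eq fst_conv snd_conv add_Pair)
  show ?thesis
    by (rule cls_eq) (use fp_rel.neg[OF gA[OF W ex(2)]] in \<open>simp_all add: L phi_def aa algebra_simps\<close>)
qed

lemma Prep_phi: "Prep l (phi l z) = phi l z"
  by (simp add: rep_extend_split phi_def lin_of Pw_def)

definition Mprop :: "('b::ring_1, 'v, 'z) bimod_scheme \<Rightarrow> ('b \<times> 'v \<Rightarrow> 'b \<times> 'v) \<Rightarrow> bool" where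
  "Mprop M f \<longleftrightarrow> (\<forall>b x. x \<in> bm_carrier M \<longrightarrow> snd (f (b, x)) \<in> bm_carrier M
      \<and> (\<forall>c. f (b * c, bm_rmul M x c) = (fst (f (b, x)) * c, bm_rmul M (snd (f (b, x))) c)))"

lemma Mprop_lop: "a \<in> Lops M \<Longrightarrow> Mprop M a"
  unfolding Mprop_def by (intro allI impI conjI lop_car lop_rmul) assumption+

lemma Mprop_comp: "Mprop M f \<Longrightarrow> Mprop M g \<Longrightarrow> Mprop M (f \<circ> g)"
proof -
  assume f: "Mprop M f" and g: "Mprop M g"
  show ?thesis unfolding Mprop_def
  proof (intro allI impI conjI)
    fix b x assume x: "x \<in> bm_carrier M"
    obtain b' x' where gx: "g (b, x) = (b', x')" by fastforce
    have gm: "snd (g (b, x)) \<in> bm_carrier M" "\<And>c. g (b * c, bm_rmul M x c) = (fst (g (b, x)) * c, bm_rmul M (snd (g (b, x))) c)"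
      using g x unfolding Mprop_def by blast+
    have x': "x' \<in> bm_carrier M" and gc: "\<And>c. g (b * c, bm_rmul M x c) = (b' * c, bm_rmul M x' c)"
      using gm gx by simp_all
    have fx: "snd (f (b', x')) \<in> bm_carrier M" "\<And>c. f (b' * c, bm_rmul M x' c) = (fst (f (b', x')) * c, bm_rmul M (snd (f (b', x'))) c)"
      using f x' unfolding Mprop_def by blast+
    show "snd ((f \<circ> g) (b, x)) \<in> bm_carrier M" using fx gx by simp
    fix c show "(f \<circ> g) (b * c, bm_rmul M x c) = (fst ((f \<circ> g) (b, x)) * c, bm_rmul M (snd ((f \<circ> g) (b, x))) c)"
      using fx gx gc by simp
  qed
qed

lemma list_mod:
  assumes bm: "\<forall>l\<in>I. bimodule \<iota> (Xo l)" and lI: "l \<in> I"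
  shows "set as \<subseteq> A_free Xo I l \<union> A_bool Xo I l \<Longrightarrow> \<exists>f. Mprop (Xo l) f \<and>
     (\<forall>b x. x \<in> bm_carrier (Xo l) \<longrightarrow> foldr (\<circ>) as id (fp_cls Xo I (phi l (b, x))) = fp_cls Xo I (phi l (f (b, x))))"
proof (induction as)
  case Nil
  show ?case by (rule exI[of _ id]) (simp add: Mprop_def)
next
  case (Cons M as)
  have "set as \<subseteq> A_free Xo I l \<union> A_bool Xo I l" using Cons.prems by simp
  then obtain g where g: "Mprop (Xo l) g"
    "\<And>b x. x \<in> bm_carrier (Xo l) \<Longrightarrow> foldr (\<circ>) as id (fp_cls Xo I (phi l (b, x))) = fp_cls Xo I (phi l (g (b, x)))"
    using Cons.IH by blast
  have gC: "\<And>b x. x \<in> bm_carrier (Xo l) \<Longrightarrow> snd (g (b, x)) \<in> bm_carrier (Xo l)" using g(1) unfolding Mprop_def by blast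
  have M: "M \<in> A_free Xo I l \<union> A_bool Xo I l" using Cons by simp
  then obtain a where a: "a \<in> Lops (Xo l)" and
    Ma: "M = fp_lambda Xo I l a \<or> M = fp_P Xo I l \<circ> fp_lambda Xo I l a \<circ> fp_P Xo I l"
    unfolding A_free_def A_bool_def by (auto simp only: image_iff Un_iff)
  have key: "M (fp_cls Xo I (phi l z)) = fp_cls Xo I (phi l (a z))" if z: "snd z \<in> bm_carrier (Xo l)" for z
  proof -
    obtain zb zx where zz: "z = (zb, zx)" by fastforce
    have zx: "zx \<in> bm_carrier (Xo l)" using z zz by simp
    have L1: "fp_lambda Xo I l a (fp_cls Xo I (phi l z)) = fp_cls Xo I (phi l (a z))"
      unfolding zz lam_cls[OF bm lI a] by (rule phi_lam[OF bm lI a zx])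
    have P1: "fp_P Xo I l (fp_cls Xo I (phi l w)) = fp_cls Xo I (phi l w)" for w
      by (simp only: P_cls Prep_phi)
    show ?thesis using Ma
    proof
      assume h: "M = fp_lambda Xo I l a" show ?thesis unfolding h by (rule L1)
    next
      assume h: "M = fp_P Xo I l \<circ> fp_lambda Xo I l a \<circ> fp_P Xo I l"
      show ?thesis unfolding h comp_apply P1 L1 ..
    qed
  qed
  show ?case
  proof (rule exI[of _ "a \<circ> g"], intro conjI allI impI)
    show "Mprop (Xo l) (a \<circ> g)" by (rule Mprop_comp[OF Mprop_lop[OF a] g(1)])
    fix b x assume x: "x \<in> bm_carrier (Xo l)"
    show "foldr (\<circ>) (M # as) id (fp_cls Xo I (phi l (b, x))) = fp_cls Xo I (phi l ((a \<circ> g) (b, x)))"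
      unfolding foldr.simps comp_apply g(2)[OF x] by (rule key[OF gC[OF x]])
  qed
qed



definition Jf :: "'i \<Rightarrow> 'i \<Rightarrow> (('i \<times> 'v) list \<Rightarrow>\<^sub>0 int) set" where
  "Jf j l = {h. Poly_Mapping.keys h \<subseteq> {w. (\<exists>x. w = [(j, x)]) \<or> (\<exists>y x. w = [(l, y), (j, x)])}}"

lemma Jf_0: "0 \<in> Jf j l" by (simp add: Jf_def)

lemma lam_junk:
  assumes jl: "j \<noteq> l" and h: "h \<in> Jf j l"
  shows "\<exists>h'\<in>Jf j l. Lrep Xo l a (r + (0, h)) = Lrep Xo l a r + (0, h')"
proof -
  let ?Jw = "{w. (\<exists>x. w = [(j, x)]) \<or> (\<exists>y x. w = [(l, y), (j, x)])}"
  have fz: "fst (lam_word Xo l a w) = 0" if "w \<in> ?Jw" for w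
    using that jl by (auto simp: lw2 lw3)
  have sk: "Poly_Mapping.keys (snd (lam_word Xo l a w)) \<subseteq> ?Jw" if "w \<in> ?Jw" for w
  proof -
    have k2: "Poly_Mapping.keys (frag_of w1 + frag_of w2) \<subseteq> {w1, w2}" for w1 w2 :: "('i \<times> 'v) list"
      using keys_add[of "frag_of w1" "frag_of w2"] by auto
    show ?thesis using that jl
      by (auto simp: lw2 lw3 word_lmul_def dest!: set_mp[OF k2])
  qed
  have "fst (lin (lam_word Xo l a) h) = 0"
    unfolding lin_def using h fz by (auto simp: Jf_def intro!: sum.neutral)
  moreover have "snd (lin (lam_word Xo l a) h) \<in> Jf j l"
  proof -
    have "(\<Union>x\<in>Poly_Mapping.keys h. Poly_Mapping.keys (snd (lam_word Xo l a x))) \<subseteq> ?Jw"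
      using h sk unfolding Jf_def by blast
    then show ?thesis
      unfolding lin_def Jf_def using keys_frag_extend[of "\<lambda>w. snd (lam_word Xo l a w)" h] by simp
  qed
  ultimately show ?thesis
    by (intro bexI[of _ "snd (lin (lam_word Xo l a) h)"]) (auto simp: rep_extend_split lin_add prod_eq_iff)
qed

lemma P_junk:
  assumes jl: "j \<noteq> l" and h: "h \<in> Jf j l"
  shows "Prep l (r + (0, h)) = Prep l r"
proof -
  have "lin (Pw l) h = 0"
    unfolding lin_def using h jl
    by (auto simp: Jf_def Pw_def zero_prod_def intro!: sum.neutral frag_extend_eq_0)
  then show ?thesis by (simp add: rep_extend_split lin_add)
qed

lemma list_junk:
  fixes Xo :: "'i \<Rightarrow> ('b::ring_1, 'v, 'z) bimod_scheme"
  assumes bm: "\<forall>l\<in>I. bimodule \<iota> (Xo l)" and lI: "l \<in> I" and jl: "j \<noteq> l"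
  shows "set as \<subseteq> A_free Xo I l \<union> A_bool Xo I l \<Longrightarrow> \<exists>F. (\<forall>r. foldr (\<circ>) as id (fp_cls Xo I r) = fp_cls Xo I (F r))
     \<and> (\<forall>r h. h \<in> (Jf j l :: (('i \<times> 'v) list \<Rightarrow>\<^sub>0 int) set) \<longrightarrow> (\<exists>h'\<in>Jf j l. F (r + (0, h)) = F r + (0, h')))
     \<and> ((\<exists>M\<in>set as. M \<in> A_bool Xo I l) \<longrightarrow> (\<forall>r h. h \<in> (Jf j l :: (('i \<times> 'v) list \<Rightarrow>\<^sub>0 int) set) \<longrightarrow> F (r + (0, h)) = F r))"
proof (induction as)
  case Nil
  show ?case by (rule exI[of _ id]) auto
next
  case (Cons M as)
  have "set as \<subseteq> A_free Xo I l \<union> A_bool Xo I l" using Cons.prems by simp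
  then obtain F where F1: "\<And>r. foldr (\<circ>) as id (fp_cls Xo I r) = fp_cls Xo I (F r)"
    and F2: "\<And>r (h :: ('i \<times> 'v) list \<Rightarrow>\<^sub>0 int). h \<in> Jf j l \<Longrightarrow> \<exists>h'\<in>Jf j l. F (r + (0, h)) = F r + (0, h')"
    and F3: "(\<exists>M\<in>set as. M \<in> A_bool Xo I l) \<longrightarrow> (\<forall>r (h :: ('i \<times> 'v) list \<Rightarrow>\<^sub>0 int). h \<in> Jf j l \<longrightarrow> F (r + (0, h)) = F r)"
    using Cons.IH by blast
  have M: "M \<in> A_free Xo I l \<union> A_bool Xo I l" using Cons by simp
  show ?case
  proof (cases "M \<in> A_bool Xo I l")
    case False
    then have "M \<in> A_free Xo I l" using M by blast
    then obtain a where a: "a \<in> Lops (Xo l)" and Ma: "M = fp_lambda Xo I l a"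
      unfolding A_free_def by blast
    show ?thesis
    proof (rule exI[of _ "Lrep Xo l a \<circ> F"], intro conjI allI impI)
      fix r show "foldr (\<circ>) (M # as) id (fp_cls Xo I r) = fp_cls Xo I ((Lrep Xo l a \<circ> F) r)"
        using F1 lam_cls[OF bm lI a] Ma by simp
    next
      fix r and h :: "('i \<times> 'v) list \<Rightarrow>\<^sub>0 int" assume h: "h \<in> Jf j l"
      obtain h' where h': "h' \<in> Jf j l" "F (r + (0, h)) = F r + (0, h')" using F2[OF h] by blast
      show "\<exists>h'\<in>Jf j l. (Lrep Xo l a \<circ> F) (r + (0, h)) = (Lrep Xo l a \<circ> F) r + (0, h')"
        using lam_junk[OF jl h'(1), where a=a and r="F r" and Xo=Xo] h'(2) by simp
    next
      fix r and h :: "('i \<times> 'v) list \<Rightarrow>\<^sub>0 int" assume B: "\<exists>M'\<in>set (M # as). M' \<in> A_bool Xo I l" and h: "h \<in> Jf j l"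
      have ex: "\<exists>M\<in>set as. M \<in> A_bool Xo I l" using B False by auto
      have "F (r + (0, h)) = F r" using mp[OF F3 ex] h by blast
      then show "(Lrep Xo l a \<circ> F) (r + (0, h)) = (Lrep Xo l a \<circ> F) r" by simp
    qed
  next
    case True
    then obtain a where a: "a \<in> Lops (Xo l)" and Ma: "M = fp_P Xo I l \<circ> fp_lambda Xo I l a \<circ> fp_P Xo I l"
      unfolding A_bool_def by blast
    let ?G = "Prep l \<circ> Lrep Xo l a \<circ> Prep l \<circ> F"
    have G: "?G (r + (0, h)) = ?G r" if h: "h \<in> Jf j l" for r and h :: "('i \<times> 'v) list \<Rightarrow>\<^sub>0 int"
    proof -
      obtain h' where h': "h' \<in> Jf j l" "F (r + (0, h)) = F r + (0, h')" using F2[OF h] by blast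
      show ?thesis using P_junk[OF jl h'(1), where r="F r"] h'(2) by simp
    qed
    show ?thesis
    proof (rule exI[of _ ?G], intro conjI allI impI)
      fix r show "foldr (\<circ>) (M # as) id (fp_cls Xo I r) = fp_cls Xo I (?G r)"
        using F1 lam_cls[OF bm lI a] Ma by (simp add: P_cls)
    next
      fix r and h :: "('i \<times> 'v) list \<Rightarrow>\<^sub>0 int" assume h: "h \<in> Jf j l"
      show "\<exists>h'\<in>Jf j l. ?G (r + (0, h)) = ?G r + (0, h')"
        using G[OF h] Jf_0 by (metis add.right_neutral zero_prod_def)
    next
      fix r and h :: "('i \<times> 'v) list \<Rightarrow>\<^sub>0 int" assume "h \<in> Jf j l" then show "?G (r + (0, h)) = ?G r" by (rule G)
    qed
  qed
qed



lemma bp_step: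
  fixes Xo :: "'i \<Rightarrow> ('b::ring_1, 'v, 'z) bimod_scheme"
  assumes bm: "\<forall>l\<in>I. bimodule \<iota> (Xo l)" and lI: "l \<in> I" and bp: "boolean_product Xo I l A"
  shows "(\<exists>x0. x0 \<in> bm_carrier (Xo l) \<and> A (fp_cls Xo I (1, 0)) = fp_cls Xo I (phi l (fp_E Xo I A, x0)))
    \<and> (\<forall>j c x. j \<noteq> l \<longrightarrow> (\<exists>x'. x' \<in> bm_carrier (Xo l) \<and>
          A (fp_cls Xo I (phi j (c, x))) = fp_cls Xo I (phi l (fp_E Xo I A * c, x'))))"
proof -
  note bl = bm[rule_format, OF lI]
  note f = bm_facts[OF bl]
  let ?z = "bm_zero (Xo l)"
  obtain as where as: "set as \<subseteq> A_free Xo I l \<union> A_bool Xo I l" "\<exists>a\<in>set as. a \<in> A_bool Xo I l"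
    "A = foldr (\<circ>) as id"
    using bp unfolding boolean_product_def by blast
  obtain g where g: "Mprop (Xo l) g"
    "\<And>b x. x \<in> bm_carrier (Xo l) \<Longrightarrow> A (fp_cls Xo I (phi l (b, x))) = fp_cls Xo I (phi l (g (b, x)))"
    using list_mod[OF bm lI as(1)] as(3) by blast
  have gz: "snd (g (1, ?z)) \<in> bm_carrier (Xo l)" "\<And>c. g (1 * c, bm_rmul (Xo l) ?z c) = (fst (g (1, ?z)) * c, bm_rmul (Xo l) (snd (g (1, ?z))) c)"
    using g(1) f(1) unfolding Mprop_def by blast+
  have gc: "g (c, ?z) = (fst (g (1, ?z)) * c, bm_rmul (Xo l) (snd (g (1, ?z))) c)" for c
    using gz(2)[of c] rm_zero[OF bl, of c] by simp
  have A1: "A (fp_cls Xo I (1, 0)) = fp_cls Xo I (phi l (fst (g (1, ?z)), snd (g (1, ?z))))"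
    using cls_c0[where Xo=Xo and l=l, OF bl lI, of 1] g(2)[OF f(1), of 1] by simp
  have E: "fp_E Xo I A = fst (g (1, ?z))"
    unfolding fp_E_def A1 p_cls by (simp add: phi_def)
  have Ac: "A (fp_cls Xo I (c, 0)) = fp_cls Xo I (phi l (fst (g (1, ?z)) * c, bm_rmul (Xo l) (snd (g (1, ?z))) c))" for c
    using cls_c0[where Xo=Xo and l=l, OF bl lI, of c] g(2)[OF f(1), of c] gc[of c] by simp
  show ?thesis
  proof (intro conjI allI impI)
    show "\<exists>x0. x0 \<in> bm_carrier (Xo l) \<and> A (fp_cls Xo I (1, 0)) = fp_cls Xo I (phi l (fp_E Xo I A, x0))"
      using A1 E gz(1) by auto
    fix j c x assume jl: "j \<noteq> l"
    obtain F where F1: "\<And>r. foldr (\<circ>) as id (fp_cls Xo I r) = fp_cls Xo I (F r)"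
      and F3: "(\<exists>M\<in>set as. M \<in> A_bool Xo I l) \<longrightarrow> (\<forall>r (h :: ('i \<times> 'v) list \<Rightarrow>\<^sub>0 int). h \<in> Jf j l \<longrightarrow> F (r + (0, h)) = F r)"
      using list_junk[OF bm lI jl as(1)] by blast
    have hJ: "frag_of [(j, x)] \<in> (Jf j l :: (('i \<times> 'v) list \<Rightarrow>\<^sub>0 int) set)" by (simp add: Jf_def)
    have F0: "F ((c, 0) + (0, frag_of [(j, x)])) = F (c, 0)" using mp[OF F3 as(2)] hJ by blast
    have "A (fp_cls Xo I (phi j (c, x))) = A (fp_cls Xo I (c, 0))"
      unfolding as(3) F1 using F0 by (simp add: phi_def)
    also have "\<dots> = fp_cls Xo I (phi l (fp_E Xo I A * c, bm_rmul (Xo l) (snd (g (1, ?z))) c))"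
      using Ac E by simp
    finally show "\<exists>x'. x' \<in> bm_carrier (Xo l) \<and> A (fp_cls Xo I (phi j (c, x))) = fp_cls Xo I (phi l (fp_E Xo I A * c, x'))"
      using f(4)[OF gz(1)] by blast
  qed
qed

theorem corollary6p4:
  fixes \<iota> :: "complex \<Rightarrow> 'b::ring_1"
    and Xo :: "'i \<Rightarrow> ('b, 'v) bimod"
    and I :: "'i set"
    and m :: nat
    and k :: "nat \<Rightarrow> 'i"
    and A :: "nat \<Rightarrow> ('b, 'i, 'v) fp_elem \<Rightarrow> ('b, 'i, 'v) fp_elem"
  assumes "complex_algebra \<iota>"
    and "\<forall>l\<in>I. bimodule \<iota> (Xo l)"
    and "\<forall>i<m. k i \<in> I"
    and "\<forall>i. Suc i < m \<longrightarrow> k i \<noteq> k (Suc i)"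
    and "\<forall>i<m. boolean_product Xo I (k i) (A i)"
  shows "fp_E Xo I (foldr (\<circ>) (map A [0..<m]) id)
           = prod_list (map (\<lambda>i. fp_E Xo I (A i)) [0..<m])"
proof -
  note bm = assms(2)
  let ?E = "\<lambda>i. fp_E Xo I (A i)"
  let ?Q = "\<lambda>n. \<exists>x. x \<in> bm_carrier (Xo (k n)) \<and> foldr (\<circ>) (map A [n..<m]) id (fp_cls Xo I (1, 0))
      = fp_cls Xo I (phi (k n) (prod_list (map ?E [n..<m]), x))"
  have st: "n < m \<Longrightarrow> (\<exists>x0. x0 \<in> bm_carrier (Xo (k n)) \<and> A n (fp_cls Xo I (1, 0)) = fp_cls Xo I (phi (k n) (?E n, x0)))
    \<and> (\<forall>j c x. j \<noteq> k n \<longrightarrow> (\<exists>x'. x' \<in> bm_carrier (Xo (k n)) \<and>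
          A n (fp_cls Xo I (phi j (c, x))) = fp_cls Xo I (phi (k n) (?E n * c, x'))))" for n
    using bp_step[OF bm, of "k n" "A n"] assms(3,5) by blast
  have Q: "?Q n" if "n < m" for n
  proof -
    have "n \<le> m - 1" using that by simp
    then show ?thesis
    proof (induction rule: inc_induct)
      case base
      have m1: "m - 1 < m" using that by simp
      have u: "[m - 1..<m] = [m - 1]" using that by (simp add: upt_conv_Cons)
      show ?case using conjunct1[OF st[OF m1]] unfolding u by simp
    next
      case (step n)
      have nm: "n < m" "Suc n < m" using step(2) by auto
      obtain x where x: "x \<in> bm_carrier (Xo (k (Suc n)))"
        "foldr (\<circ>) (map A [Suc n..<m]) id (fp_cls Xo I (1, 0)) = fp_cls Xo I (phi (k (Suc n)) (prod_list (map ?E [Suc n..<m]), x))"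
        using step(3) by blast
      have kk: "k (Suc n) \<noteq> k n" using assms(4) nm(2) by metis
      obtain x' where x': "x' \<in> bm_carrier (Xo (k n))"
        "A n (fp_cls Xo I (phi (k (Suc n)) (prod_list (map ?E [Suc n..<m]), x)))
          = fp_cls Xo I (phi (k n) (?E n * prod_list (map ?E [Suc n..<m]), x'))"
        using conjunct2[OF st[OF nm(1)]] kk by blast
      have u: "[n..<m] = n # [Suc n..<m]" using nm(1) by (simp add: upt_conv_Cons)
      have eq: "foldr (\<circ>) (map A [n..<m]) id (fp_cls Xo I (1, 0)) = A n (foldr (\<circ>) (map A [Suc n..<m]) id (fp_cls Xo I (1, 0)))"
        unfolding u by simp
      have pl: "prod_list (map ?E [n..<m]) = ?E n * prod_list (map ?E [Suc n..<m])" unfolding u by simp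
      show ?case unfolding eq x(2) pl using x' by blast
    qed
  qed
  show ?thesis
  proof (cases "m = 0")
    case True
    then show ?thesis by (simp add: fp_E_def p_cls)
  next
    case False
    then obtain x where "foldr (\<circ>) (map A [0..<m]) id (fp_cls Xo I (1, 0)) = fp_cls Xo I (phi (k 0) (prod_list (map ?E [0..<m]), x))"
      using Q[of 0] by auto
    then show ?thesis unfolding fp_E_def by (simp add: p_cls phi_def)
  qed
qed

end
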